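(* In a multi-unit auction with $m$ identical items, there exists a randomized (universally) obviously strategy-proof mechanism that achieves a $400$-approximation to the optimal social welfare for bidders with decreasing marginal valuations.
   Context: Bidder $i$'s valuation is $v_i:\{0,1,\dots,m\}\to\mathbb{R}_{\ge0}$ with $v_i(0)=0$; it has decreasing marginals if $v_i(j)-v_i(j-1)\ge v_i(j+1)-v_i(j)$ for every $j$ with $1\le j\le m-1$. Valuations are private, the domain is all such valuations, utilities quasi-linear. $\mathrm{OPT}$ is the maximum of $\sum_iv_i(q_i)$ over nonnegative integers with $\sum_iq_i\le m$. A deterministic mechanism is a rooted tree: each internal node is assigned to one bidder, who sends one of the messages labeling the outgoing edges; each leaf is labeled with a feasible allocation and payments. A behavior $B_i$ specifies a message at every node of bidder $i$; a profile $B$ determines a path $\mathrm{Path}(B)$ with allocation $f_i(B)$ and payment $p_i(B)$ for $i$. A strategy $\mathcal S_i$ maps each valuation to a behavior; it is obviously dominant if for every $v_i$, every node $u$ of $i$, every $B_{-i}$ and every profile $B'$ with $u\in\mathrm{Path}(\mathcal S_i(v_i),B_{-i})\cap\mathrm{Path}(B')$ and $B'_i$ sending at $u$ a message different from $\mathcal S_i(v_i)$'s, $v_i(f_i(\mathcal S_i(v_i),B_{-i}))-p_i(\mathcal S_i(v_i),B_{-i})\ge v_i(f_i(B'))-p_i(B')$. A randomized mechanism (distribution over deterministic mechanisms with strategies) is universally OSP if each mechanism in its support is OSP; it gives an $\alpha$-approximation if for every profile $\mathrm{OPT}\le\alpha\,\mathbb{E}[\text{welfare}]$ when bidders follow their strategies.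 *)

theory Defs
  imports "HOL-Probability.Probability"
begin

text \<open>Valuations on {0..m}: represented as functions nat => real, normalised to 0 beyond m.\<close>
definition dm_valuation :: "nat \<Rightarrow> (nat \<Rightarrow> real) \<Rightarrow> bool" where
  "dm_valuation m v \<longleftrightarrow> v 0 = 0 \<and> (\<forall>j\<le>m. v j \<ge> 0) \<and> (\<forall>j>m. v j = 0) \<and>
     (\<forall>j. 1 \<le> j \<and> j + 1 \<le> m \<longrightarrow> v j - v (j - 1) \<ge> v (j + 1) - v j)"

definition OPT :: "nat \<Rightarrow> nat \<Rightarrow> (nat \<Rightarrow> nat \<Rightarrow> real) \<Rightarrow> real" where
  "OPT n m v = Max {(\<Sum>i<n. v i (q i)) | q :: nat \<Rightarrow> nat. (\<Sum>i<n. q i) \<le> m}"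

text \<open>Deterministic mechanism trees (every path is finite). A node is owned by a bidder,
  has a set of allowed messages and a child for each message. A leaf carries an
  allocation (numbers of units) and payments.\<close>
datatype 'msg mech =
    Leaf "nat \<Rightarrow> nat" "nat \<Rightarrow> real"
  | Node nat "'msg set" "'msg \<Rightarrow> 'msg mech"

text \<open>Nodes are identified by their message history from the root.\<close>
primrec subtree :: "'msg mech \<Rightarrow> 'msg list \<Rightarrow> 'msg mech option" where
  "subtree (Leaf a p) h = (case h of [] \<Rightarrow> Some (Leaf a p) | x # xs \<Rightarrow> None)"
| "subtree (Node i M c) h = (case h of [] \<Rightarrow> Some (Node i M c)
     | x # xs \<Rightarrow> (if x \<in> M then subtree (c x) xs else None))"

primrec wf_mech :: "nat \<Rightarrow> nat \<Rightarrow> 'msg mech \<Rightarrow> bool" where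
  "wf_mech n m (Leaf a p) \<longleftrightarrow> (\<Sum>i<n. a i) \<le> m"
| "wf_mech n m (Node i M c) \<longleftrightarrow> i < n \<and> M \<noteq> {} \<and> (\<forall>x\<in>M. wf_mech n m (c x))"

definition behavior :: "'msg mech \<Rightarrow> nat \<Rightarrow> ('msg list \<Rightarrow> 'msg) \<Rightarrow> bool" where
  "behavior t i b \<longleftrightarrow> (\<forall>h M c. subtree t h = Some (Node i M c) \<longrightarrow> b h \<in> M)"

definition profile :: "nat \<Rightarrow> 'msg mech \<Rightarrow> (nat \<Rightarrow> 'msg list \<Rightarrow> 'msg) \<Rightarrow> bool" where
  "profile n t B \<longleftrightarrow> (\<forall>i<n. behavior t i (B i))"

primrec path_from :: "'msg mech \<Rightarrow> (nat \<Rightarrow> 'msg list \<Rightarrow> 'msg) \<Rightarrow> 'msg list \<Rightarrow> 'msg list" where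
  "path_from (Leaf a p) B h = h"
| "path_from (Node i M c) B h = path_from (c (B i h)) B (h @ [B i h])"

primrec outcome_from :: "'msg mech \<Rightarrow> (nat \<Rightarrow> 'msg list \<Rightarrow> 'msg) \<Rightarrow> 'msg list \<Rightarrow> (nat \<Rightarrow> nat) \<times> (nat \<Rightarrow> real)" where
  "outcome_from (Leaf a p) B h = (a, p)"
| "outcome_from (Node i M c) B h = outcome_from (c (B i h)) B (h @ [B i h])"

definition Path :: "'msg mech \<Rightarrow> (nat \<Rightarrow> 'msg list \<Rightarrow> 'msg) \<Rightarrow> 'msg list" where
  "Path t B = path_from t B []"

definition on_path :: "'msg mech \<Rightarrow> (nat \<Rightarrow> 'msg list \<Rightarrow> 'msg) \<Rightarrow> 'msg list \<Rightarrow> bool" where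
  "on_path t B u \<longleftrightarrow> prefix u (Path t B)"

definition alloc :: "'msg mech \<Rightarrow> (nat \<Rightarrow> 'msg list \<Rightarrow> 'msg) \<Rightarrow> nat \<Rightarrow> nat" where
  "alloc t B i = fst (outcome_from t B []) i"

definition pay :: "'msg mech \<Rightarrow> (nat \<Rightarrow> 'msg list \<Rightarrow> 'msg) \<Rightarrow> nat \<Rightarrow> real" where
  "pay t B i = snd (outcome_from t B []) i"

definition strategies :: "nat \<Rightarrow> nat \<Rightarrow> 'msg mech \<Rightarrow> (nat \<Rightarrow> (nat \<Rightarrow> real) \<Rightarrow> 'msg list \<Rightarrow> 'msg) \<Rightarrow> bool" where
  "strategies n m t S \<longleftrightarrow> (\<forall>i<n. \<forall>v. dm_valuation m v \<longrightarrow> behavior t i (S i v))"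

definition OSP :: "nat \<Rightarrow> nat \<Rightarrow> 'msg mech \<Rightarrow> (nat \<Rightarrow> (nat \<Rightarrow> real) \<Rightarrow> 'msg list \<Rightarrow> 'msg) \<Rightarrow> bool" where
  "OSP n m t S \<longleftrightarrow>
    (\<forall>i<n. \<forall>v. dm_valuation m v \<longrightarrow>
      (\<forall>u M c B B'. subtree t u = Some (Node i M c) \<longrightarrow>
         profile n t B \<longrightarrow> profile n t B' \<longrightarrow>
         on_path t (B(i := S i v)) u \<longrightarrow> on_path t B' u \<longrightarrow>
         B' i u \<noteq> S i v u \<longrightarrow>
         v (alloc t (B(i := S i v)) i) - pay t (B(i := S i v)) i \<ge> v (alloc t B' i) - pay t B' i))"

definition welfare :: "nat \<Rightarrow> 'msg mech \<Rightarrow> (nat \<Rightarrow> (nat \<Rightarrow> real) \<Rightarrow> 'msg list \<Rightarrow> 'msg) \<Rightarrow> (nat \<Rightarrow> nat \<Rightarrow> real) \<Rightarrow> real" where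
  "welfare n t S v = (\<Sum>i<n. v i (alloc t (\<lambda>j. S j (v j)) i))"

definition universally_OSP :: "nat \<Rightarrow> nat \<Rightarrow> ('msg mech \<times> (nat \<Rightarrow> (nat \<Rightarrow> real) \<Rightarrow> 'msg list \<Rightarrow> 'msg)) pmf \<Rightarrow> bool" where
  "universally_OSP n m R \<longleftrightarrow>
     (\<forall>(t, S) \<in> set_pmf R. wf_mech n m t \<and> strategies n m t S \<and> OSP n m t S)"

definition approximation :: "nat \<Rightarrow> nat \<Rightarrow> real \<Rightarrow> ('msg mech \<times> (nat \<Rightarrow> (nat \<Rightarrow> real) \<Rightarrow> 'msg list \<Rightarrow> 'msg)) pmf \<Rightarrow> bool" where
  "approximation n m \<alpha> R \<longleftrightarrow>
     (\<forall>v. (\<forall>i<n. dm_valuation m (v i)) \<longrightarrow>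
        OPT n m v \<le> \<alpha> * measure_pmf.expectation R (\<lambda>(t, S). welfare n t S v))"

end

theory Submission
  imports Defs "HOL-Combinatorics.Multiset_Permutations"
begin



definition Fs :: "nat set \<Rightarrow> nat \<Rightarrow> (nat \<Rightarrow> nat) set" where
  "Fs A s = {q. (\<forall>i. i \<notin> A \<longrightarrow> q i = 0) \<and> sum q A \<le> s}"

definition val :: "nat set \<Rightarrow> (nat \<Rightarrow> nat \<Rightarrow> real) \<Rightarrow> (nat \<Rightarrow> nat) \<Rightarrow> real" where
  "val A w q = (\<Sum>i\<in>A. w i (q i))"

definition G :: "nat set \<Rightarrow> (nat \<Rightarrow> nat \<Rightarrow> real) \<Rightarrow> nat \<Rightarrow> real" where
  "G A w s = Max (val A w ` Fs A s)"

definition canon :: "nat set \<Rightarrow> (nat \<Rightarrow> nat \<Rightarrow> real) \<Rightarrow> nat \<Rightarrow> (nat \<Rightarrow> nat)" where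
  "canon A w s = (SOME q. q \<in> Fs A s \<and> (\<forall>q'\<in>Fs A s. val A w q' \<le> val A w q))"

lemma Fs_finite: assumes "finite A" shows "finite (Fs A s)"
proof -
  have "Fs A s \<subseteq> {f. \<forall>x. (x \<in> A \<longrightarrow> f x \<in> {..s}) \<and> (x \<notin> A \<longrightarrow> f x = 0)}"
  proof
    fix q assume q: "q \<in> Fs A s"
    { fix x assume "x \<in> A"
      then have "q x \<le> sum q A" using assms by (intro member_le_sum) auto
      then have "q x \<le> s" using q by (auto simp: Fs_def) }
    then show "q \<in> {f. \<forall>x. (x \<in> A \<longrightarrow> f x \<in> {..s}) \<and> (x \<notin> A \<longrightarrow> f x = 0)}"
      using q by (auto simp: Fs_def)
  qed
  then show ?thesis using finite_set_of_finite_funs[OF assms, of "{..s}" 0] finite_subset by blast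
qed

lemma zero_Fs: "(\<lambda>_. 0) \<in> Fs A s" by (simp add: Fs_def)

lemma canon_spec: assumes "finite A"
  shows "canon A w s \<in> Fs A s \<and> (\<forall>q'\<in>Fs A s. val A w q' \<le> val A w (canon A w s))"
proof -
  let ?V = "val A w ` Fs A s"
  have fin: "finite ?V" using Fs_finite[OF assms] by simp
  have ne: "?V \<noteq> {}" using zero_Fs by blast
  obtain q where q: "q \<in> Fs A s" "val A w q = Max ?V" using Max_in[OF fin ne] by auto
  have "\<forall>q'\<in>Fs A s. val A w q' \<le> val A w q" using q fin by auto
  with q have "\<exists>q. q \<in> Fs A s \<and> (\<forall>q'\<in>Fs A s. val A w q' \<le> val A w q)" by blast
  then show ?thesis unfolding canon_def by (rule someI_ex)
qed

lemma G_canon: assumes "finite A" shows "G A w s = val A w (canon A w s)"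
proof -
  have fin: "finite (val A w ` Fs A s)" using Fs_finite[OF assms] by simp
  show ?thesis unfolding G_def using canon_spec[OF assms, where s=s and w=w] fin
    by (intro antisym Max.boundedI) auto
qed

lemma G_ge: assumes "finite A" "q \<in> Fs A s" shows "val A w q \<le> G A w s"
  using canon_spec[OF assms(1), where s=s and w=w] assms G_canon[OF assms(1)] by auto

lemma val_cong: "(\<And>i. i \<in> A \<Longrightarrow> w i = w' i) \<Longrightarrow> val A w = val A w'"
  unfolding val_def by (intro ext sum.cong) auto

lemma canon_cong: "(\<And>i. i \<in> A \<Longrightarrow> w i = w' i) \<Longrightarrow> canon A w s = canon A w' s"
  unfolding canon_def using val_cong by metis

lemma G_cong: "(\<And>i. i \<in> A \<Longrightarrow> w i = w' i) \<Longrightarrow> G A w s = G A w' s"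
  unfolding G_def using val_cong by metis

lemma canon_le: assumes "finite A" "i \<in> A" shows "canon A w s i \<le> s"
proof -
  have "canon A w s \<in> Fs A s" using canon_spec[OF assms(1)] by blast
  then have "canon A w s i \<le> sum (canon A w s) A" "sum (canon A w s) A \<le> s"
    using assms by (auto simp: Fs_def intro: member_le_sum)
  then show ?thesis by linarith
qed

lemma canon_sum: assumes "finite A" shows "sum (canon A w s) A \<le> s"
  using canon_spec[OF assms] by (auto simp: Fs_def)

lemma key_menu:
  assumes fin: "finite A" and a: "a \<notin> A" and q: "q \<le> s"
  shows "w a q - (G A w s - G A w (s - q))
     \<le> w a (canon (insert a A) w s a) - (G A w s - G A w (s - canon (insert a A) w s a))"
proof -
  let ?B = "insert a A"
  let ?c = "canon ?B w s"
  have finB: "finite ?B" using fin by simp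
  have cF: "?c \<in> Fs ?B s" and cmax: "\<forall>q'\<in>Fs ?B s. val ?B w q' \<le> val ?B w ?c"
    using canon_spec[OF finB] by auto
  have valB: "val ?B w f = w a (f a) + val A w f" for f
    using fin a by (simp add: val_def)
  let ?r = "\<lambda>i. if i \<in> A then ?c i else 0"
  have sumB: "sum ?c ?B = ?c a + sum ?c A" using fin a by simp
  have "sum ?r A = sum ?c A" by (rule sum.cong) auto
  then have rF: "?r \<in> Fs A (s - ?c a)" using cF sumB by (auto simp: Fs_def)
  have "val A w ?r = val A w ?c" unfolding val_def by (rule sum.cong) auto
  then have i: "val ?B w ?c \<le> w a (?c a) + G A w (s - ?c a)"
    using G_ge[OF fin rF, of w] valB by simp
  obtain p where pF: "p \<in> Fs A (s - q)" and pv: "val A w p = G A w (s - q)"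
    using canon_spec[OF fin, where s="s - q" and w=w] G_canon[OF fin] by metis
  let ?p = "p(a := q)"
  have "sum ?p A = sum p A" using a by (intro sum.cong) auto
  then have "sum ?p ?B = q + sum p A" using fin a by simp
  then have pF': "?p \<in> Fs ?B s" using pF q a by (auto simp: Fs_def)
  have "val A w ?p = val A w p" using a unfolding val_def by (intro sum.cong) auto
  then have "w a q + G A w (s - q) \<le> val ?B w ?c" using cmax pF' valB[of ?p] pv by fastforce
  with i show ?thesis by linarith
qed




lemma split_alloc:
  fixes n :: nat and q :: "nat \<Rightarrow> nat"
  shows "(\<Sum>i<n. q i) \<le> s1 + s2 \<Longrightarrow> \<exists>a b. (\<forall>i. a i + b i = q i) \<and> (\<Sum>i<n. a i) \<le> s1 \<and> (\<Sum>i<n. b i) \<le> s2"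
proof (induction n arbitrary: s1 s2)
  case 0
  show ?case by (rule exI[of _ q], rule exI[of _ "\<lambda>_. 0"]) simp
next
  case (Suc n)
  let ?an = "min (q n) s1" let ?bn = "q n - min (q n) s1"
  have "(\<Sum>i<n. q i) \<le> (s1 - ?an) + (s2 - ?bn)" using Suc.prems by auto
  from Suc.IH[OF this] obtain a b where ab: "\<forall>i. a i + b i = q i" "(\<Sum>i<n. a i) \<le> s1 - ?an"
    "(\<Sum>i<n. b i) \<le> s2 - ?bn" by blast
  let ?a = "a(n := ?an)" let ?b = "b(n := ?bn)"
  have e1: "(\<Sum>i<Suc n. ?a i) = (\<Sum>i<n. a i) + ?an" by simp
  have e2: "(\<Sum>i<Suc n. ?b i) = (\<Sum>i<n. b i) + ?bn" by simp
  have "?bn \<le> s2" using Suc.prems by auto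
  then show ?case using ab e1 e2
    by (intro exI[of _ ?a] exI[of _ ?b]) auto
qed

lemma dm_marg:
  assumes "dm_valuation m v" "j \<le> k" "k + 1 \<le> m"
  shows "v (k + 1) - v k \<le> v (j + 1) - v j"
  using assms(2,3)
proof (induction k)
  case 0 then show ?case by simp
next
  case (Suc k)
  show ?case
  proof (cases "j = Suc k")
    case True then show ?thesis by simp
  next
    case False
    then have "j \<le> k" using Suc.prems by simp
    have h: "\<And>j. 1 \<le> j \<Longrightarrow> j + 1 \<le> m \<Longrightarrow> v (j+1) - v j \<le> v j - v (j - 1)"
      using assms(1) unfolding dm_valuation_def by blast
    have "v (Suc k) - v (Suc k - 1) \<ge> v (Suc k + 1) - v (Suc k)"
      using h[of "Suc k"] Suc.prems by simp
    then show ?thesis using Suc.IH[OF \<open>j \<le> k\<close>] Suc.prems by simp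
  qed
qed

lemma dm_subadd:
  assumes "dm_valuation m v" "a + b \<le> m"
  shows "v (a + b) \<le> v a + v b"
  using assms(2)
proof (induction a)
  case 0 then show ?case using assms(1) by (simp add: dm_valuation_def)
next
  case (Suc a)
  have "v (a + b + 1) - v (a + b) \<le> v (a + 1) - v a"
    using dm_marg[OF assms(1), of a "a + b"] Suc.prems by simp
  then show ?case using Suc.IH Suc.prems by simp
qed

lemma dm_nonneg: "dm_valuation m v \<Longrightarrow> 0 \<le> v q"
  unfolding dm_valuation_def by (cases "q \<le> m") auto

lemma OPT_le:
  assumes dm: "\<forall>i<n. dm_valuation m (v i)" and mp: "m \<le> 2 * mp"
  shows "OPT n m v \<le> 2 * G {..<n} v mp"
proof -
  let ?S = "{(\<Sum>i<n. v i (q i)) | q :: nat \<Rightarrow> nat. (\<Sum>i<n. q i) \<le> m}"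
  let ?H = "{f. \<forall>x. (x \<in> {..<n} \<longrightarrow> f x \<in> {..m}) \<and> (x \<notin> {..<n} \<longrightarrow> f x = (0::nat))}"
  have "?S \<subseteq> (\<lambda>q. \<Sum>i<n. v i (q i)) ` ?H"
  proof
    fix x assume "x \<in> ?S"
    then obtain q where q: "x = (\<Sum>i<n. v i (q i))" "(\<Sum>i<n. q i) \<le> m" by blast
    let ?q = "\<lambda>i. if i < n then q i else 0"
    have "?q \<in> ?H"
    proof -
      { fix i assume "i < n"
        then have "q i \<le> (\<Sum>i<n. q i)" by (intro member_le_sum) auto
        then have "q i \<le> m" using q by simp }
      then show ?thesis by auto
    qed
    moreover have "x = (\<Sum>i<n. v i (?q i))" using q by simp
    ultimately show "x \<in> (\<lambda>q. \<Sum>i<n. v i (q i)) ` ?H" by (intro image_eqI[where x="?q"]) auto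
  qed
  then have fin: "finite ?S"
    using finite_set_of_finite_funs[of "{..<n}" "{..m}" 0] finite_subset by blast
  have "(\<Sum>i<n. v i ((\<lambda>_. 0) i)) \<in> ?S" by (rule CollectI, rule exI[of _ "\<lambda>_. 0"]) simp
  then have ne: "?S \<noteq> {}" by blast
  have bound: "x \<le> 2 * G {..<n} v mp" if "x \<in> ?S" for x
  proof -
    from that obtain q where q: "x = (\<Sum>i<n. v i (q i))" "(\<Sum>i<n. q i) \<le> m" by blast
    then have "(\<Sum>i<n. q i) \<le> mp + mp" using mp by simp
    from split_alloc[OF this] obtain a b where ab: "\<forall>i. a i + b i = q i" "(\<Sum>i<n. a i) \<le> mp"
      "(\<Sum>i<n. b i) \<le> mp" by blast
    have qle: "q i \<le> m" if "i < n" for i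
    proof -
      have "q i \<le> (\<Sum>i<n. q i)" using that by (intro member_le_sum) auto
      then show ?thesis using q by simp
    qed
    let ?a = "\<lambda>i. if i < n then a i else 0" let ?b = "\<lambda>i. if i < n then b i else 0"
    have aF: "?a \<in> Fs {..<n} mp" using ab by (auto simp: Fs_def)
    have bF: "?b \<in> Fs {..<n} mp" using ab by (auto simp: Fs_def)
    have "x \<le> (\<Sum>i<n. v i (a i) + v i (b i))"
      unfolding q(1)
    proof (rule sum_mono)
      fix i assume "i \<in> {..<n}"
      then show "v i (q i) \<le> v i (a i) + v i (b i)"
        using dm_subadd[of m "v i" "a i" "b i"] dm qle ab(1) by (metis lessThan_iff)
    qed
    also have "\<dots> = val {..<n} v ?a + val {..<n} v ?b"
      unfolding val_def by (simp add: sum.distrib)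
    also have "\<dots> \<le> 2 * G {..<n} v mp"
      using G_ge[OF _ aF, of v] G_ge[OF _ bF, of v] by simp
    finally show ?thesis .
  qed
  show ?thesis unfolding OPT_def using fin ne bound by (intro Max.boundedI) auto
qed




record mstate =
  stA :: "nat set"
  stw :: "nat \<Rightarrow> nat \<Rightarrow> real"
  stal :: "nat \<Rightarrow> nat"
  stpy :: "nat \<Rightarrow> real"
  str :: nat

datatype step = Menu nat | Rev nat nat | Done nat

fun owner :: "step \<Rightarrow> nat" where
  "owner (Menu a) = a" | "owner (Rev a t) = a" | "owner (Done a) = a"

definition price :: "nat \<Rightarrow> mstate \<Rightarrow> nat \<Rightarrow> real" where
  "price mp st q = G (stA st) (stw st) mp - G (stA st) (stw st) (mp - q)"

definition cap :: "nat \<Rightarrow> mstate \<Rightarrow> nat" where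
  "cap mp st = min mp (str st)"

definition util :: "nat \<Rightarrow> nat \<Rightarrow> (nat \<Rightarrow> real) \<Rightarrow> mstate \<Rightarrow> nat \<Rightarrow> real" where
  "util mp a v st q = v (stal st a + q) - (stpy st a + price mp st q)"

definition choice :: "nat \<Rightarrow> nat \<Rightarrow> (nat \<Rightarrow> real) \<Rightarrow> mstate \<Rightarrow> nat" where
  "choice mp a v st = (let c = cap mp st; s = canon (insert a (stA st)) ((stw st)(a := v)) mp a in
     if s \<le> c \<and> (\<forall>q\<le>c. util mp a v st q \<le> util mp a v st s) then s
     else (SOME q. q \<le> c \<and> (\<forall>q'\<le>c. util mp a v st q' \<le> util mp a v st q)))"

definition menu_upd :: "nat \<Rightarrow> nat \<Rightarrow> nat \<Rightarrow> mstate \<Rightarrow> mstate" where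
  "menu_upd mp a q st = st\<lparr>stal := (stal st)(a := stal st a + q),
      stpy := (stpy st)(a := stpy st a + price mp st q), str := str st - q\<rparr>"

definition rev_upd :: "nat \<Rightarrow> nat \<Rightarrow> real \<Rightarrow> mstate \<Rightarrow> mstate" where
  "rev_upd a t x st = st\<lparr>stw := (stw st)(a := (stw st a)(t := x))\<rparr>"

definition addA :: "nat \<Rightarrow> mstate \<Rightarrow> mstate" where
  "addA a st = st\<lparr>stA := insert a (stA st)\<rparr>"

definition menuset :: "nat \<Rightarrow> mstate \<Rightarrow> real set" where
  "menuset mp st = of_nat ` {..cap mp st}"

primrec build :: "nat \<Rightarrow> step list \<Rightarrow> mstate \<Rightarrow> real mech" where
  "build mp [] st = Leaf (stal st) (stpy st)"
| "build mp (s # ss) st = (case s of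
      Done a \<Rightarrow> build mp ss (addA a st)
    | Menu a \<Rightarrow> Node a (menuset mp st) (\<lambda>x. build mp ss (menu_upd mp a (nat \<lfloor>x\<rfloor>) st))
    | Rev a t \<Rightarrow> Node a UNIV (\<lambda>x. build mp ss (rev_upd a t x st)))"

fun replay :: "nat \<Rightarrow> step list \<Rightarrow> mstate \<Rightarrow> real list \<Rightarrow> step list \<times> mstate" where
  "replay mp [] st h = ([], st)"
| "replay mp (Done a # ss) st h = replay mp ss (addA a st) h"
| "replay mp (Menu a # ss) st [] = (Menu a # ss, st)"
| "replay mp (Menu a # ss) st (x # h) = replay mp ss (menu_upd mp a (nat \<lfloor>x\<rfloor>) st) h"
| "replay mp (Rev a t # ss) st [] = (Rev a t # ss, st)"
| "replay mp (Rev a t # ss) st (x # h) = replay mp ss (rev_upd a t x st) h"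

definition st0 :: "nat \<Rightarrow> mstate" where
  "st0 m = \<lparr>stA = {}, stw = (\<lambda>_ _. 0), stal = (\<lambda>_. 0), stpy = (\<lambda>_. 0), str = m\<rparr>"

definition strat :: "nat \<Rightarrow> nat \<Rightarrow> step list \<Rightarrow> nat \<Rightarrow> (nat \<Rightarrow> real) \<Rightarrow> real list \<Rightarrow> real" where
  "strat mp m ss0 i v h = (case replay mp ss0 (st0 m) h of
      (Menu a # _, s) \<Rightarrow> of_nat (choice mp a v s)
    | (Rev a t # _, s) \<Rightarrow> v t
    | _ \<Rightarrow> 0)"

fun okl :: "step list \<Rightarrow> bool" where
  "okl [] = True"
| "okl (Done a # ss) = okl ss"
| "okl (s # ss) = (Menu (owner s) \<notin> set ss \<and> okl ss)"

lemma okl_Cons: "okl (s # ss) \<Longrightarrow> okl ss"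
  by (cases s) auto

lemma okl_suffix: "okl ss \<Longrightarrow> suffix ss' ss \<Longrightarrow> okl ss'"
proof (induction ss)
  case Nil then show ?case by simp
next
  case (Cons s ss) then show ?case using okl_Cons by (auto simp: suffix_Cons)
qed

lemma ex_argmax_nat: "\<exists>q\<le>(c::nat). \<forall>q'\<le>c. (f q' :: real) \<le> f q"
proof (induction c)
  case 0 then show ?case by auto
next
  case (Suc c)
  then obtain q where q: "q \<le> c" "\<forall>q'\<le>c. f q' \<le> f q" by blast
  show ?case
  proof (cases "f (Suc c) \<le> f q")
    case True then show ?thesis using q by (intro exI[of _ q]) (auto simp: le_Suc_eq)
  next
    case False then show ?thesis using q by (intro exI[of _ "Suc c"]) (auto simp: le_Suc_eq)
  qed
qed

lemma choice_spec:
  "choice mp a v st \<le> cap mp st \<and>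
   (\<forall>q\<le>cap mp st. util mp a v st q \<le> util mp a v st (choice mp a v st))"
proof -
  let ?c = "cap mp st" let ?f = "util mp a v st"
  have ex: "\<exists>q. q \<le> ?c \<and> (\<forall>q'\<le>?c. ?f q' \<le> ?f q)" using ex_argmax_nat[of ?c ?f] by blast
  show ?thesis unfolding choice_def Let_def
    using someI_ex[OF ex] by auto
qed

lemma path_from_ext: "\<exists>z. path_from t B h = h @ z"
proof (induction t arbitrary: h)
  case (Leaf a p) then show ?case by simp
next
  case (Node i M c)
  obtain z where "path_from (c (B i h)) B (h @ [B i h]) = (h @ [B i h]) @ z"
    using Node.IH[of "c (B i h)" "h @ [B i h]"] by auto
  then show ?case by simp
qed

lemma outcome_on_path:
  "subtree t u = Some t' \<Longrightarrow> prefix (h @ u) (path_from t B h) \<Longrightarrow>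
   outcome_from t B h = outcome_from t' B (h @ u)"
proof (induction t arbitrary: h u)
  case (Leaf a p) then show ?case by (cases u) auto
next
  case (Node i M c)
  show ?case
  proof (cases u)
    case Nil then show ?thesis using Node.prems by simp
  next
    case (Cons x u')
    with Node.prems have xM: "x \<in> M" and st: "subtree (c x) u' = Some t'"
      by (auto split: if_splits)
    obtain z where z: "path_from (c (B i h)) B (h @ [B i h]) = (h @ [B i h]) @ z"
      using path_from_ext by blast
    from Node.prems(2) Cons have "prefix (h @ x # u') (path_from (c (B i h)) B (h @ [B i h]))" by simp
    with z have "prefix (h @ x # u') (h @ B i h # z)" by simp
    then have x: "x = B i h" and "prefix u' z" by auto
    then have pre: "prefix ((h @ [x]) @ u') (path_from (c x) B (h @ [x]))" using z by simp
    have "outcome_from (c x) B (h @ [x]) = outcome_from t' B ((h @ [x]) @ u')"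
      using Node.IH[OF _ st pre] by simp
    then show ?thesis using Cons x by simp
  qed
qed

lemma subtree_build:
  "subtree (build mp ss st) h = Some t' \<Longrightarrow>
   t' = build mp (fst (replay mp ss st h)) (snd (replay mp ss st h))"
proof (induction mp ss st h rule: replay.induct)
  case (1 mp st h) then show ?case by (cases h) auto
next
  case (2 mp a ss st h) then show ?case by simp
next
  case (3 mp a ss st) then show ?case by simp
next
  case (4 mp a ss st x h) then show ?case by (auto split: if_splits)
next
  case (5 mp a t ss st) then show ?case by simp
next
  case (6 mp a t ss st x h) then show ?case by (auto split: if_splits)
qed

lemma replay_suffix: "suffix (fst (replay mp ss st h)) ss"
  by (induction mp ss st h rule: replay.induct) (auto intro: suffix_ConsI)

lemma replay_head:
  "fst (replay mp ss st h) = [] \<or> (\<exists>a rest. fst (replay mp ss st h) = Menu a # rest)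
   \<or> (\<exists>a t rest. fst (replay mp ss st h) = Rev a t # rest)"
  by (induction mp ss st h rule: replay.induct) auto

lemma fixed_outcome:
  "Menu i \<notin> set ss \<Longrightarrow> fst (outcome_from (build mp ss st) B h) i = stal st i \<and>
      snd (outcome_from (build mp ss st) B h) i = stpy st i"
proof (induction ss arbitrary: st h)
  case Nil then show ?case by simp
next
  case (Cons s ss)
  then show ?case
    by (cases s) (auto simp: addA_def menu_upd_def rev_upd_def)
qed

lemma cap_menu: "x \<in> menuset mp st \<Longrightarrow> \<exists>q. x = of_nat q \<and> q \<le> cap mp st"
  unfolding menuset_def by auto




lemma sum_upd_add:
  fixes f :: "nat \<Rightarrow> nat"
  assumes "a < n" shows "(\<Sum>i<n. (f(a := f a + q)) i) = (\<Sum>i<n. f i) + q"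
proof -
  have "(\<Sum>i<n. (f(a := f a + q)) i) = (\<Sum>i<n. f i + (if i = a then q else 0))"
    by (rule sum.cong) auto
  also have "\<dots> = (\<Sum>i<n. f i) + q" using assms by (simp add: sum.distrib)
  finally show ?thesis .
qed

lemma wf_build:
  "(\<forall>s\<in>set ss. owner s < n) \<Longrightarrow> (\<Sum>i<n. stal st i) + str st \<le> m \<Longrightarrow> wf_mech n m (build mp ss st)"
proof (induction ss arbitrary: st)
  case Nil then show ?case by simp
next
  case (Cons s ss)
  show ?case
  proof (cases s)
    case (Done a) then show ?thesis using Cons by (simp add: addA_def)
  next
    case (Rev a t) then show ?thesis using Cons by (simp add: rev_upd_def)
  next
    case (Menu a)
    have an: "a < n" using Cons.prems Menu by auto
    have ne: "menuset mp st \<noteq> {}" unfolding menuset_def by auto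
    have "wf_mech n m (build mp ss (menu_upd mp a (nat \<lfloor>x\<rfloor>) st))" if xm: "x \<in> menuset mp st" for x
    proof -
      obtain q where q: "x = of_nat q" "q \<le> cap mp st" using cap_menu[OF xm] by blast
      have "q \<le> str st" using q by (simp add: cap_def)
      then have "(\<Sum>i<n. stal (menu_upd mp a q st) i) + str (menu_upd mp a q st) \<le> m"
        using Cons.prems(2) sum_upd_add[OF an, of "stal st" q] by (simp add: menu_upd_def)
      then show ?thesis using Cons q by simp
    qed
    then show ?thesis using Menu an ne by simp
  qed
qed

lemma behavior_strat: "behavior (build mp ss0 (st0 m)) i (strat mp m ss0 i v)"
  unfolding behavior_def
proof (intro allI impI)
  fix h M c assume sub: "subtree (build mp ss0 (st0 m)) h = Some (Node i M c)"
  obtain ss' st' where rp: "replay mp ss0 (st0 m) h = (ss', st')" by fastforce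
  have node: "Node i M c = build mp ss' st'" using subtree_build[OF sub] rp by simp
  from replay_head[of mp ss0 "st0 m" h] rp
  consider "ss' = []" | a rest where "ss' = Menu a # rest" | a t rest where "ss' = Rev a t # rest" by auto
  then show "strat mp m ss0 i v h \<in> M"
  proof cases
    case 1 then show ?thesis using node by simp
  next
    case 2
    then have "i = a" "M = menuset mp st'" using node by auto
    moreover have "strat mp m ss0 i v h = of_nat (choice mp a v st')" using rp 2 by (simp add: strat_def)
    ultimately show ?thesis using choice_spec[of mp a v st'] by (simp add: menuset_def)
  next
    case 3
    then have "M = UNIV" using node by auto
    then show ?thesis by simp
  qed
qed

lemma OSP_build:
  assumes ok: "okl ss0"
  shows "OSP n m (build mp ss0 (st0 m)) (strat mp m ss0)"
  unfolding OSP_def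
proof (intro allI impI)
  fix i v u M c B B'
  assume iN: "i < n" and dmv: "dm_valuation m v"
    and sub: "subtree (build mp ss0 (st0 m)) u = Some (Node i M c)"
    and pB: "profile n (build mp ss0 (st0 m)) B" and pB': "profile n (build mp ss0 (st0 m)) B'"
    and op1: "on_path (build mp ss0 (st0 m)) (B(i := strat mp m ss0 i v)) u"
    and op2: "on_path (build mp ss0 (st0 m)) B' u"
    and dev: "B' i u \<noteq> strat mp m ss0 i v u"
  let ?t = "build mp ss0 (st0 m)"
  let ?B1 = "B(i := strat mp m ss0 i v)"
  obtain ss' st' where rp: "replay mp ss0 (st0 m) u = (ss', st')" by fastforce
  have node: "Node i M c = build mp ss' st'" using subtree_build[OF sub] rp by simp
  have okss: "okl ss'" using okl_suffix[OF ok] replay_suffix[of mp ss0 "st0 m" u] rp by simp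
  have gen: "outcome_from ?t Bx [] = outcome_from (Node i M c) Bx u" if "on_path ?t Bx u" for Bx
    using outcome_on_path[OF sub, of "[]" Bx] that by (simp add: on_path_def Path_def)
  have B'M: "B' i u \<in> M"
    using pB' iN sub unfolding profile_def behavior_def by blast
  from replay_head[of mp ss0 "st0 m" u] rp
  consider "ss' = []" | a rest where "ss' = Menu a # rest" | a t rest where "ss' = Rev a t # rest" by auto
  then show "v (alloc ?t B' i) - pay ?t B' i \<le> v (alloc ?t ?B1 i) - pay ?t ?B1 i"
  proof cases
    case 1 then show ?thesis using node by simp
  next
    case 2
    then have ia: "i = a" and MM: "M = menuset mp st'"
      and cc: "c = (\<lambda>x. build mp rest (menu_upd mp a (nat \<lfloor>x\<rfloor>) st'))" using node by auto
    have nr: "Menu i \<notin> set rest" using okss 2 ia by simp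
    have res: "alloc ?t Bx i = stal st' i + nat \<lfloor>Bx i u\<rfloor> \<and>
               pay ?t Bx i = stpy st' i + price mp st' (nat \<lfloor>Bx i u\<rfloor>)" if "on_path ?t Bx u" for Bx
    proof -
      have "outcome_from ?t Bx [] = outcome_from (build mp rest (menu_upd mp i (nat \<lfloor>Bx i u\<rfloor>) st')) Bx (u @ [Bx i u])"
        using gen[OF that] cc ia by simp
      then show ?thesis using fixed_outcome[OF nr, of mp "menu_upd mp i (nat \<lfloor>Bx i u\<rfloor>) st'" Bx "u @ [Bx i u]"]
        by (simp add: alloc_def pay_def menu_upd_def)
    qed
    have s1: "?B1 i u = of_nat (choice mp i v st')" using rp 2 ia by (simp add: strat_def)
    obtain q' where q': "B' i u = of_nat q'" "q' \<le> cap mp st'" using cap_menu B'M MM by blast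
    have "util mp i v st' q' \<le> util mp i v st' (choice mp i v st')" using choice_spec q'(2) by blast
    then show ?thesis using res[OF op1] res[OF op2] s1 q'(1) by (simp add: util_def)
  next
    case 3
    then have ia: "i = a"
      and cc: "c = (\<lambda>x. build mp rest (rev_upd a t x st'))" using node by auto
    have nr: "Menu i \<notin> set rest" using okss 3 ia by simp
    have res: "alloc ?t Bx i = stal st' i \<and> pay ?t Bx i = stpy st' i" if "on_path ?t Bx u" for Bx
    proof -
      have "outcome_from ?t Bx [] = outcome_from (build mp rest (rev_upd i t (Bx i u) st')) Bx (u @ [Bx i u])"
        using gen[OF that] cc ia by simp
      then show ?thesis using fixed_outcome[OF nr, of mp "rev_upd i t (Bx i u) st'" Bx "u @ [Bx i u]"]
        by (simp add: alloc_def pay_def rev_upd_def)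
    qed
    show ?thesis using res[OF op1] res[OF op2] by simp
  qed
qed




definition blk :: "nat \<Rightarrow> nat \<Rightarrow> nat \<Rightarrow> nat \<Rightarrow> step list" where
  "blk m L p a = (if p < L then [] else [Menu a]) @ map (Rev a) [0..<Suc m] @ [Done a]"

primrec stepsR :: "nat \<Rightarrow> nat \<Rightarrow> nat list \<Rightarrow> step list" where
  "stepsR m L [] = []"
| "stepsR m L (a # zs) = stepsR m L zs @ blk m L (Suc (length zs)) a"

lemma okl_append: "okl xs \<Longrightarrow> okl ys \<Longrightarrow> (\<forall>s\<in>set xs. Menu (owner s) \<notin> set ys) \<Longrightarrow> okl (xs @ ys)"
proof (induction xs)
  case Nil then show ?case by simp
next
  case (Cons s xs)
  then show ?case using okl_Cons[of s xs] by (cases s) auto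
qed

lemma okl_revs: "okl (map (Rev a) ts @ [Done a])"
  by (induction ts) auto

lemma owners_stepsR: "s \<in> set (stepsR m L ys) \<Longrightarrow> owner s \<in> set ys"
  by (induction ys) (auto simp: blk_def split: if_splits)

lemma okl_stepsR: "distinct ys \<Longrightarrow> okl (stepsR m L ys)"
proof (induction ys)
  case Nil then show ?case by simp
next
  case (Cons a zs)
  have ob: "okl (blk m L (Suc (length zs)) a)"
    using okl_revs[of a "[0..<Suc m]"] by (auto simp: blk_def)
  have "Menu (owner s) \<notin> set (blk m L (Suc (length zs)) a)" if "s \<in> set (stepsR m L zs)" for s
    using owners_stepsR[OF that] Cons.prems by (auto simp: blk_def)
  then show ?case using Cons okl_append ob by simp
qed

primrec trun :: "nat \<Rightarrow> (nat \<Rightarrow> nat \<Rightarrow> real) \<Rightarrow> step list \<Rightarrow> mstate \<Rightarrow> mstate" where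
  "trun mp v [] st = st"
| "trun mp v (s # ss) st = (case s of
      Done a \<Rightarrow> trun mp v ss (addA a st)
    | Menu a \<Rightarrow> trun mp v ss (menu_upd mp a (choice mp a (v a) st) st)
    | Rev a t \<Rightarrow> trun mp v ss (rev_upd a t (v a t) st))"

lemma trun_append: "trun mp v (xs @ ys) st = trun mp v ys (trun mp v xs st)"
  by (induction xs arbitrary: st) (auto split: step.splits)

lemma truthful_outcome:
  "(\<forall>h'. replay mp ss0 (st0 m) (h @ h') = replay mp ss st h') \<Longrightarrow>
   outcome_from (build mp ss st) (\<lambda>j. strat mp m ss0 j (v j)) h = (stal (trun mp v ss st), stpy (trun mp v ss st))"
proof (induction ss arbitrary: st h)
  case Nil then show ?case by simp
next
  case (Cons s ss)
  show ?case
  proof (cases s)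
    case (Done a)
    then show ?thesis using Cons by simp
  next
    case (Menu a)
    have e: "replay mp ss0 (st0 m) h = (Menu a # ss, st)" using Cons.prems[rule_format, of "[]"] Menu by simp
    then have sv: "strat mp m ss0 a (v a) h = of_nat (choice mp a (v a) st)" by (simp add: strat_def)
    let ?x = "real (choice mp a (v a) st)"
    have "\<forall>h'. replay mp ss0 (st0 m) ((h @ [?x]) @ h') = replay mp ss (menu_upd mp a (choice mp a (v a) st) st) h'"
      using Cons.prems Menu by simp
    from Cons.IH[OF this] show ?thesis using Menu sv by simp
  next
    case (Rev a t)
    have e: "replay mp ss0 (st0 m) h = (Rev a t # ss, st)" using Cons.prems[rule_format, of "[]"] Rev by simp
    then have sv: "strat mp m ss0 a (v a) h = v a t" by (simp add: strat_def)
    have "\<forall>h'. replay mp ss0 (st0 m) ((h @ [v a t]) @ h') = replay mp ss (rev_upd a t (v a t) st) h'"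
      using Cons.prems Rev by simp
    from Cons.IH[OF this] show ?thesis using Rev sv by simp
  qed
qed

lemma trun_revs:
  "trun mp v (map (Rev a) [0..<k]) st = st\<lparr>stw := (stw st)(a := (\<lambda>t. if t < k then v a t else stw st a t))\<rparr>"
proof (induction k)
  case 0
  have "(stw st)(a := (\<lambda>t. stw st a t)) = stw st" by auto
  then show ?case by simp
next
  case (Suc k)
  show ?case using Suc by (simp add: trun_append rev_upd_def fun_eq_iff)
qed




primrec Cc :: "nat \<Rightarrow> nat \<Rightarrow> (nat \<Rightarrow> nat \<Rightarrow> real) \<Rightarrow> nat list \<Rightarrow> nat" where
  "Cc mp L v [] = 0"
| "Cc mp L v (a # zs) = (if L \<le> Suc (length zs) then canon (set (a # zs)) v mp a else 0) + Cc mp L v zs"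

primrec Sv :: "nat \<Rightarrow> nat \<Rightarrow> nat \<Rightarrow> (nat \<Rightarrow> nat \<Rightarrow> real) \<Rightarrow> nat list \<Rightarrow> real" where
  "Sv mp L m v [] = 0"
| "Sv mp L m v (a # zs) = (if L \<le> Suc (length zs) \<and> Cc mp L v zs \<le> m - mp
      then v a (canon (set (a # zs)) v mp a) else 0) + Sv mp L m v zs"

definition Inv :: "nat \<Rightarrow> nat \<Rightarrow> nat \<Rightarrow> (nat \<Rightarrow> nat \<Rightarrow> real) \<Rightarrow> nat list \<Rightarrow> mstate \<Rightarrow> bool" where
  "Inv mp L m v zs st \<longleftrightarrow> stA st = set zs \<and> (\<forall>i\<in>set zs. stw st i = v i) \<and>
     (\<forall>i. i \<notin> set zs \<longrightarrow> stw st i = (\<lambda>_. 0) \<and> stal st i = 0) \<and>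
     str st + sum (stal st) (set zs) = m \<and> sum (stal st) (set zs) \<le> Cc mp L v zs \<and>
     Sv mp L m v zs \<le> (\<Sum>i\<in>set zs. v i (stal st i))"

lemma choice_facts:
  assumes inv: "Inv mp L m v zs st" and a: "a \<notin> set zs" and mpm: "mp \<le> m"
  defines "x \<equiv> canon (set (a # zs)) v mp a"
  shows "choice mp a (v a) st \<le> str st \<and> choice mp a (v a) st \<le> x \<and>
         (Cc mp L v zs \<le> m - mp \<longrightarrow> choice mp a (v a) st = x)"
proof -
  have A: "stA st = set zs" and W: "\<forall>i\<in>set zs. stw st i = v i" and al0: "stal st a = 0"
    and R: "str st + sum (stal st) (set zs) = m" and CC: "sum (stal st) (set zs) \<le> Cc mp L v zs"
    using inv a unfolding Inv_def by auto
  have cs: "canon (insert a (stA st)) ((stw st)(a := v a)) mp a = x"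
    unfolding x_def A using W by (subst canon_cong[where w'=v]) auto
  have pr: "price mp st q = G (set zs) v mp - G (set zs) v (mp - q)" for q
  proof -
    have "G (set zs) (stw st) s = G (set zs) v s" for s using W by (intro G_cong) auto
    then show ?thesis unfolding price_def A by simp
  qed
  have am: "util mp a (v a) st q \<le> util mp a (v a) st x" if "q \<le> mp" for q
    using key_menu[of "set zs" a q mp v] that a unfolding util_def pr al0 x_def by simp
  let ?c = "cap mp st"
  have cle: "?c \<le> mp" "?c \<le> str st" by (auto simp: cap_def)
  have xle: "x \<le> mp" unfolding x_def by (rule canon_le) auto
  have case1: "choice mp a (v a) st = x" if "x \<le> ?c"
  proof -
    have "\<forall>q\<le>?c. util mp a (v a) st q \<le> util mp a (v a) st x" using am cle by auto
    then show ?thesis using that unfolding choice_def Let_def cs by simp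
  qed
  have c1: "choice mp a (v a) st \<le> ?c" using choice_spec by blast
  have part2: "choice mp a (v a) st \<le> x"
    using case1 c1 by (cases "x \<le> ?c") auto
  have part3: "choice mp a (v a) st = x" if "Cc mp L v zs \<le> m - mp"
  proof -
    have "str st \<ge> mp" using R CC that mpm by linarith
    then have "?c = mp" by (simp add: cap_def)
    then show ?thesis using case1 xle by simp
  qed
  show ?thesis using c1 cle part2 part3 by auto
qed




lemma stw_menu_upd[simp]: "stw (menu_upd mp a q st) = stw st"
  by (simp add: menu_upd_def)

lemma Inv_step:
  assumes inv: "Inv mp L m v zs st" and a: "a \<notin> set zs" and dma: "dm_valuation m (v a)"
    and fA: "stA stF = insert a (set zs)" and fW: "stw stF = (stw st)(a := v a)"
    and fal: "stal stF = (stal st)(a := q0)" and fr: "str stF = str st - q0"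
    and q1: "q0 \<le> str st" and q2: "q0 \<le> (if L \<le> Suc (length zs) then canon (set (a # zs)) v mp a else 0)"
    and q3: "L \<le> Suc (length zs) \<and> Cc mp L v zs \<le> m - mp \<longrightarrow> q0 = canon (set (a # zs)) v mp a"
  shows "Inv mp L m v (a # zs) stF"
proof -
  have A: "stA st = set zs" and W: "\<forall>i\<in>set zs. stw st i = v i"
    and Z: "\<forall>i. i \<notin> set zs \<longrightarrow> stw st i = (\<lambda>_. 0) \<and> stal st i = 0"
    and R: "str st + sum (stal st) (set zs) = m" and CC: "sum (stal st) (set zs) \<le> Cc mp L v zs"
    and SV: "Sv mp L m v zs \<le> (\<Sum>i\<in>set zs. v i (stal st i))"
    using inv unfolding Inv_def by auto
  have s1: "sum (stal stF) (set zs) = sum (stal st) (set zs)"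
    using a fal by (intro sum.cong) auto
  have s2: "sum (stal stF) (set (a # zs)) = q0 + sum (stal st) (set zs)"
    using a s1 fal by simp
  have s3: "(\<Sum>i\<in>set zs. v i (stal stF i)) = (\<Sum>i\<in>set zs. v i (stal st i))"
    using a fal by (intro sum.cong) auto
  have s4: "(\<Sum>i\<in>set (a # zs). v i (stal stF i)) = v a q0 + (\<Sum>i\<in>set zs. v i (stal st i))"
    using a s3 fal by simp
  have nn: "0 \<le> v a q0" using dm_nonneg[OF dma] .
  have "Sv mp L m v (a # zs) \<le> (\<Sum>i\<in>set (a # zs). v i (stal stF i))"
    unfolding s4 using SV q3 nn by auto
  moreover have "sum (stal stF) (set (a # zs)) \<le> Cc mp L v (a # zs)"
    unfolding s2 using CC q2 by (auto split: if_splits)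
  moreover have "str stF + sum (stal stF) (set (a # zs)) = m"
    unfolding s2 fr using R q1 by simp
  moreover have "\<forall>i\<in>set (a # zs). stw stF i = v i" using fW W by auto
  moreover have "\<forall>i. i \<notin> set (a # zs) \<longrightarrow> stw stF i = (\<lambda>_. 0) \<and> stal stF i = 0"
    using fW fal Z by auto
  ultimately show ?thesis using fA unfolding Inv_def by simp
qed

lemma trun_inv:
  assumes "distinct ys" "\<forall>i\<in>set ys. dm_valuation m (v i)" "mp \<le> m"
  shows "Inv mp L m v ys (trun mp v (stepsR m L ys) (st0 m))"
  using assms
proof (induction ys)
  case Nil then show ?case by (simp add: Inv_def st0_def)
next
  case (Cons a zs)
  let ?st = "trun mp v (stepsR m L zs) (st0 m)"
  have inv: "Inv mp L m v zs ?st" using Cons by simp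
  have a: "a \<notin> set zs" and dma: "dm_valuation m (v a)" using Cons.prems by auto
  have wa: "stw ?st a = (\<lambda>_. 0)" using inv a unfolding Inv_def by auto
  have va: "(\<lambda>t. if t < Suc m then v a t else 0) = v a"
    using dma unfolding dm_valuation_def by (auto simp: fun_eq_iff)
  have lam: "(\<lambda>t. if t < Suc m then v a t else stw ?st a t) = v a"
    using wa dma unfolding dm_valuation_def by (auto simp: fun_eq_iff)
  have tr: "trun mp v (stepsR m L (a # zs)) (st0 m) = trun mp v (blk m L (Suc (length zs)) a) ?st"
    by (simp add: trun_append)
  show ?case
  proof (cases "Suc (length zs) < L")
    case True
    let ?F = "addA a (?st\<lparr>stw := (stw ?st)(a := (\<lambda>t. if t < Suc m then v a t else stw ?st a t))\<rparr>)"
    have e: "trun mp v (stepsR m L (a # zs)) (st0 m) = ?F"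
      unfolding tr using True by (simp add: blk_def trun_append trun_revs del: upt_Suc)
    have fW: "stw ?F = (stw ?st)(a := v a)" using lam by (simp add: addA_def)
    have fA: "stA ?F = insert a (set zs)" using inv unfolding Inv_def by (simp add: addA_def)
    have fal: "stal ?F = (stal ?st)(a := 0)" using inv a unfolding Inv_def by (auto simp: addA_def fun_eq_iff)
    have fr: "str ?F = str ?st - 0" by (simp add: addA_def)
    show ?thesis unfolding e
      by (rule Inv_step[OF inv a dma fA fW fal fr]) (use True in auto)
  next
    case False
    let ?q = "choice mp a (v a) ?st"
    let ?s1 = "menu_upd mp a ?q ?st"
    let ?F = "addA a (?s1\<lparr>stw := (stw ?s1)(a := (\<lambda>t. if t < Suc m then v a t else stw ?s1 a t))\<rparr>)"
    have e: "trun mp v (stepsR m L (a # zs)) (st0 m) = ?F"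
      unfolding tr using False by (simp add: blk_def trun_append trun_revs del: upt_Suc)
    have cf: "?q \<le> str ?st \<and> ?q \<le> canon (set (a # zs)) v mp a \<and>
         (Cc mp L v zs \<le> m - mp \<longrightarrow> ?q = canon (set (a # zs)) v mp a)"
      using choice_facts[OF inv a Cons.prems(3)] by blast
    have ws1: "stw ?s1 = stw ?st" by (simp add: menu_upd_def)
    have fW: "stw ?F = (stw ?st)(a := v a)" by (simp only: ws1 lam addA_def) simp
    have fA: "stA ?F = insert a (set zs)" using inv unfolding Inv_def by (simp add: addA_def menu_upd_def)
    have al0: "stal ?st a = 0" using inv a unfolding Inv_def by auto
    have fal: "stal ?F = (stal ?st)(a := ?q)" using al0 by (simp add: addA_def menu_upd_def)
    have fr: "str ?F = str ?st - ?q" by (simp add: addA_def menu_upd_def)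
    show ?thesis unfolding e
      by (rule Inv_step[OF inv a dma fA fW fal fr]) (use False cf in auto)
  qed
qed




lemma sum_perms:
  assumes "finite B" "B \<noteq> {}"
  shows "(\<Sum>ys\<in>permutations_of_set B. f ys) = (\<Sum>x\<in>B. \<Sum>zs\<in>permutations_of_set (B - {x}). f (x # zs))"
proof -
  have "(\<Sum>ys\<in>permutations_of_set B. f ys) = (\<Sum>ys\<in>(\<Union>x\<in>B. (\<lambda>xs. x # xs) ` permutations_of_set (B - {x})). f ys)"
    using permutations_of_set_nonempty[OF assms(2)] by simp
  also have "\<dots> = (\<Sum>x\<in>B. \<Sum>ys\<in>(\<lambda>xs. x # xs) ` permutations_of_set (B - {x}). f ys)"
    using assms(1) by (intro sum.UNION_disjoint) auto
  also have "\<dots> = (\<Sum>x\<in>B. \<Sum>zs\<in>permutations_of_set (B - {x}). f (x # zs))"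
  proof (rule sum.cong[OF refl])
    fix x assume "x \<in> B"
    have "inj_on ((#) x) (permutations_of_set (B - {x}))" by (auto simp: inj_on_def)
    from sum.reindex[OF this, of f]
    show "sum f ((#) x ` permutations_of_set (B - {x})) = (\<Sum>zs\<in>permutations_of_set (B - {x}). f (x # zs))"
      by (simp add: comp_def)
  qed
  finally show ?thesis .
qed

lemma perm_props:
  assumes "finite B" "x \<in> B" "zs \<in> permutations_of_set (B - {x})"
  shows "set (x # zs) = B" "length zs = card B - 1" "distinct (x # zs)"
  using assms by (auto simp: permutations_of_set_def distinct_card[symmetric])

lemma G_restrict:
  assumes fin: "finite B"
  shows "(\<Sum>x\<in>B. G (B - {x}) v s) \<ge> (real (card B) - 1) * G B v s"
proof -
  let ?c = "canon B v s"
  have cF: "?c \<in> Fs B s" using canon_spec[OF fin] by blast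
  have GB: "G B v s = (\<Sum>x\<in>B. v x (?c x))" using G_canon[OF fin] by (simp add: val_def)
  have each: "G (B - {x}) v s \<ge> G B v s - v x (?c x)" if x: "x \<in> B" for x
  proof -
    let ?r = "\<lambda>i. if i \<in> B - {x} then ?c i else 0"
    have "sum ?r (B - {x}) = sum ?c (B - {x})" by (intro sum.cong) auto
    also have "\<dots> \<le> sum ?c B" using fin by (intro sum_mono2) auto
    finally have "?r \<in> Fs (B - {x}) s" using cF by (auto simp: Fs_def)
    then have "val (B - {x}) v ?r \<le> G (B - {x}) v s" using fin by (intro G_ge) auto
    moreover have "val (B - {x}) v ?r = (\<Sum>i\<in>B - {x}. v i (?c i))" unfolding val_def by (intro sum.cong) auto
    moreover have "(\<Sum>i\<in>B. v i (?c i)) = v x (?c x) + (\<Sum>i\<in>B - {x}. v i (?c i))"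
      using fin x by (simp add: sum.remove)
    ultimately show ?thesis using GB by linarith
  qed
  have "(\<Sum>x\<in>B. G (B - {x}) v s) \<ge> (\<Sum>x\<in>B. G B v s - v x (?c x))" using each by (intro sum_mono) auto
  also have "(\<Sum>x\<in>B. G B v s - v x (?c x)) = real (card B) * G B v s - G B v s"
    using GB by (simp add: sum_subtractf)
  finally show ?thesis by (simp add: algebra_simps)
qed

lemma Cc_bound:
  assumes "finite B" "card B = j" "0 < L"
  shows "L * (\<Sum>ys\<in>permutations_of_set B. Cc mp L v ys) \<le> fact j * mp * (j + 1 - L)"
  using assms
proof (induction j arbitrary: B)
  case 0
  then have "B = {}" by auto
  then show ?case using 0 by simp
next
  case (Suc k)
  have fin: "finite B" and ne: "B \<noteq> {}" using Suc.prems by auto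
  have ck: "card (B - {x}) = k" if "x \<in> B" for x using Suc.prems that by simp
  have IH: "L * (\<Sum>zs\<in>permutations_of_set (B - {x}). Cc mp L v zs) \<le> fact k * mp * (k + 1 - L)"
    if "x \<in> B" for x using Suc.IH[of "B - {x}"] fin ck[OF that] Suc.prems by simp
  let ?t = "\<lambda>x. if L \<le> Suc k then canon B v mp x else 0"
  have eq: "(\<Sum>ys\<in>permutations_of_set B. Cc mp L v ys) =
        (\<Sum>x\<in>B. fact k * ?t x) + (\<Sum>x\<in>B. \<Sum>zs\<in>permutations_of_set (B - {x}). Cc mp L v zs)"
  proof -
    have "(\<Sum>ys\<in>permutations_of_set B. Cc mp L v ys) =
       (\<Sum>x\<in>B. \<Sum>zs\<in>permutations_of_set (B - {x}). ?t x + Cc mp L v zs)"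
      unfolding sum_perms[OF fin ne]
    proof (intro sum.cong refl)
      fix x zs assume x: "x \<in> B" and zs: "zs \<in> permutations_of_set (B - {x})"
      have "set (x # zs) = B" "length zs = k" using perm_props[OF fin x zs] Suc.prems by auto
      then show "Cc mp L v (x # zs) = ?t x + Cc mp L v zs" by simp
    qed
    also have "\<dots> = (\<Sum>x\<in>B. fact k * ?t x + (\<Sum>zs\<in>permutations_of_set (B - {x}). Cc mp L v zs))"
      using fin ck by (intro sum.cong refl) (simp add: sum.distrib)
    finally show ?thesis by (simp add: sum.distrib)
  qed
  have t1: "(\<Sum>x\<in>B. ?t x) \<le> (if L \<le> Suc k then mp else 0)"
    using canon_sum[OF fin, of v mp] by auto
  have p1: "L * (\<Sum>x\<in>B. fact k * ?t x) \<le> L * fact k * (if L \<le> Suc k then mp else 0)"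
    using t1 by (simp add: sum_distrib_left[symmetric] mult.assoc)
  have p2: "L * (\<Sum>x\<in>B. \<Sum>zs\<in>permutations_of_set (B - {x}). Cc mp L v zs) \<le> Suc k * (fact k * mp * (k + 1 - L))"
  proof -
    have "L * (\<Sum>x\<in>B. \<Sum>zs\<in>permutations_of_set (B - {x}). Cc mp L v zs)
        = (\<Sum>x\<in>B. L * (\<Sum>zs\<in>permutations_of_set (B - {x}). Cc mp L v zs))" by (simp add: sum_distrib_left)
    also have "\<dots> \<le> (\<Sum>x\<in>B. fact k * mp * (k + 1 - L))" using IH by (intro sum_mono) auto
    also have "\<dots> = Suc k * (fact k * mp * (k + 1 - L))" using Suc.prems by simp
    finally show ?thesis .
  qed
  show ?case
  proof (cases "L \<le> Suc k")
    case True
    define X where "X = fact k * mp"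
    define D where "D = k + 1 - L"
    have h1: "L * X \<le> Suc k * X" using True by (rule mult_le_mono1)
    have e1: "Suc k + 1 - L = 1 + D" using True unfolding D_def by simp
    have e2: "fact (Suc k) * mp = Suc k * X" unfolding X_def by (simp add: algebra_simps)
    have r: "fact (Suc k) * mp * (Suc k + 1 - L) = Suc k * X * (1 + D)"
      by (simp only: e1 e2)
    have h2: "L * X + Suc k * (X * D) \<le> Suc k * X * (1 + D)" using h1 by (simp add: algebra_simps)
    have "L * (\<Sum>ys\<in>permutations_of_set B. Cc mp L v ys) =
      L * (\<Sum>x\<in>B. fact k * ?t x) + L * (\<Sum>x\<in>B. \<Sum>zs\<in>permutations_of_set (B - {x}). Cc mp L v zs)"
      unfolding eq by (simp add: add_mult_distrib2)
    also have "\<dots> \<le> L * X + Suc k * (X * D)"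
    proof (rule add_mono)
      have "L * fact k * (if L \<le> Suc k then mp else 0) = L * X" using True unfolding X_def by (simp add: mult.assoc)
      then show "L * (\<Sum>x\<in>B. fact k * ?t x) \<le> L * X" using p1 by linarith
      have "Suc k * (fact k * mp * (k + 1 - L)) = Suc k * (X * D)" unfolding X_def D_def by simp
      then show "L * (\<Sum>x\<in>B. \<Sum>zs\<in>permutations_of_set (B - {x}). Cc mp L v zs) \<le> Suc k * (X * D)"
        using p2 by linarith
    qed
    also have "\<dots> \<le> fact (Suc k) * mp * (Suc k + 1 - L)" using h2 r by simp
    finally show ?thesis .
  next
    case False
    then have "k + 1 - L = 0" by simp
    then show ?thesis using eq p1 p2 False by simp
  qed
qed




lemma good_count:
  assumes fin: "finite B" and cB: "card B = k" and kn: "k + 1 \<le> n" and L0: "0 < L"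
    and nL: "2 * (n - L) \<le> L" and mpm: "mp \<le> m - mp + 1"
  shows "fact k \<le> 2 * card {zs \<in> permutations_of_set B. Cc mp L v zs \<le> m - mp}"
proof -
  let ?P = "permutations_of_set B"
  let ?good = "{zs \<in> ?P. Cc mp L v zs \<le> m - mp}"
  let ?bad = "{zs \<in> ?P. \<not> Cc mp L v zs \<le> m - mp}"
  let ?S = "\<Sum>ys\<in>?P. Cc mp L v ys"
  have cP: "card ?P = fact k" using fin cB by simp
  have "card ?P = card ?good + card ?bad"
    by (subst card_Un_disjoint[symmetric]) (auto intro: arg_cong[where f=card])
  then have split: "card ?good + card ?bad = fact k" using cP by simp
  have "card ?bad * (m - mp + 1) = (\<Sum>zs\<in>?bad. m - mp + 1)" by simp
  also have "\<dots> \<le> (\<Sum>zs\<in>?bad. Cc mp L v zs)" by (intro sum_mono) auto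
  also have "\<dots> \<le> ?S" by (intro sum_mono2) auto
  finally have b1: "card ?bad * (m - mp + 1) \<le> ?S" .
  have "L * ?S \<le> fact k * mp * (k + 1 - L)" using Cc_bound[OF fin cB L0] .
  also have "\<dots> \<le> fact k * mp * (n - L)" using kn by (intro mult_le_mono2) auto
  finally have "2 * (L * ?S) \<le> 2 * (fact k * mp * (n - L))" by simp
  also have "\<dots> = fact k * mp * (2 * (n - L))" by simp
  also have "\<dots> \<le> fact k * mp * L" using nL by (intro mult_le_mono2)
  finally have "L * (2 * ?S) \<le> L * (fact k * mp)" by (simp add: algebra_simps)
  then have b2: "2 * ?S \<le> fact k * mp" using L0 by simp
  have "2 * card ?bad * (m - mp + 1) \<le> fact k * mp" using b1 b2 by simp
  also have "\<dots> \<le> fact k * (m - mp + 1)" using mpm by (rule mult_le_mono2)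
  finally have h: "(2 * card ?bad) * Suc (m - mp) \<le> fact k * Suc (m - mp)" by simp
  have "2 * card ?bad \<le> fact k" using mult_le_cancel2[of "2 * card ?bad" "Suc (m - mp)" "fact k"] h by simp
  then show ?thesis using split by linarith
qed

lemma Sv_nonneg: "(\<forall>i\<in>set ys. dm_valuation m (v i)) \<Longrightarrow> 0 \<le> Sv mp L m v ys"
proof (induction ys)
  case Nil then show ?case by simp
next
  case (Cons a ys)
  have "0 \<le> v a q" for q using Cons.prems dm_nonneg by auto
  then show ?case using Cons by (simp add: add_nonneg_nonneg)
qed

lemma G_nonneg: assumes "finite B" "\<forall>i\<in>B. v i 0 = 0" shows "0 \<le> G B v s"
proof -
  have "val B v (\<lambda>_. 0) = 0" using assms(2) by (simp add: val_def)
  then show ?thesis using G_ge[OF assms(1) zero_Fs, of v s] by simp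
qed

lemma sum_if_const: "finite P \<Longrightarrow> (\<Sum>zs\<in>P. if Q zs then (a::real) else 0) = real (card {zs\<in>P. Q zs}) * a"
proof -
  assume "finite P"
  have "(\<Sum>zs\<in>P. if Q zs then a else 0) = (\<Sum>zs\<in>{zs\<in>P. Q zs}. a)"
    using \<open>finite P\<close> by (simp add: sum.inter_filter[symmetric])
  then show ?thesis by simp
qed




lemma Sv_bound:
  assumes "finite B" "card B = j" "j \<le> n" "0 < L" "2 * (n - L) \<le> L" "mp \<le> m - mp + 1"
    "\<forall>i\<in>B. dm_valuation m (v i)"
  shows "real (fact (j - 1)) * real (j + 1 - L) * G B v mp \<le> 2 * (\<Sum>ys\<in>permutations_of_set B. Sv mp L m v ys)"
  using assms
proof (induction j arbitrary: B)
  case 0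
  then show ?case by simp
next
  case (Suc k)
  have fin: "finite B" and ne: "B \<noteq> {}" using Suc.prems by auto
  have ck: "card (B - {x}) = k" if "x \<in> B" for x using Suc.prems that by simp
  have dmB: "\<forall>i\<in>B. dm_valuation m (v i)" using Suc.prems by blast
  let ?c = "canon B v mp"
  let ?gd = "\<lambda>x. {zs \<in> permutations_of_set (B - {x}). Cc mp L v zs \<le> m - mp}"
  let ?T = "\<lambda>x zs. if L \<le> Suc k \<and> Cc mp L v zs \<le> m - mp then v x (?c x) else 0"
  let ?P1 = "\<Sum>x\<in>B. \<Sum>zs\<in>permutations_of_set (B - {x}). ?T x zs"
  let ?P2 = "\<Sum>x\<in>B. \<Sum>zs\<in>permutations_of_set (B - {x}). Sv mp L m v zs"
  have eq: "(\<Sum>ys\<in>permutations_of_set B. Sv mp L m v ys) = ?P1 + ?P2"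
  proof -
    have "(\<Sum>ys\<in>permutations_of_set B. Sv mp L m v ys) =
       (\<Sum>x\<in>B. \<Sum>zs\<in>permutations_of_set (B - {x}). ?T x zs + Sv mp L m v zs)"
      unfolding sum_perms[OF fin ne]
    proof (rule sum.cong[OF refl], rule sum.cong[OF refl])
      fix x zs assume x: "x \<in> B" and zs: "zs \<in> permutations_of_set (B - {x})"
      have "set (x # zs) = B" "length zs = k" using perm_props[OF fin x zs] Suc.prems by auto
      then show "Sv mp L m v (x # zs) = ?T x zs + Sv mp L m v zs" by simp
    qed
    then show ?thesis by (simp add: sum.distrib)
  qed
  have vnn: "0 \<le> v x q" if "x \<in> B" for x q using dmB that dm_nonneg by blast
  have GB: "G B v mp = (\<Sum>x\<in>B. v x (?c x))" using G_canon[OF fin] by (simp add: val_def)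
  have v0: "\<forall>i\<in>B. v i 0 = 0" using dmB by (auto simp: dm_valuation_def)
  have Gnn: "0 \<le> G B v mp" using G_nonneg[where B=B and v=v and s=mp, OF fin v0] by simp
  have p1: "(if L \<le> Suc k then real (fact k) * G B v mp else 0) \<le> 2 * ?P1"
  proof (cases "L \<le> Suc k")
    case False
    then show ?thesis by simp
  next
    case True
    have each: "real (fact k) * v x (?c x) \<le> 2 * (\<Sum>zs\<in>permutations_of_set (B - {x}). ?T x zs)" if x: "x \<in> B" for x
    proof -
      have "(\<Sum>zs\<in>permutations_of_set (B - {x}). ?T x zs) = real (card (?gd x)) * v x (?c x)"
        using True sum_if_const[of "permutations_of_set (B - {x})" "\<lambda>zs. Cc mp L v zs \<le> m - mp" "v x (?c x)"]
        by simp
      moreover have "fact k \<le> 2 * card (?gd x)"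
        using good_count[of "B - {x}" k n L mp m v] fin ck[OF x] Suc.prems by auto
      then have "real (fact k) \<le> 2 * real (card (?gd x))" by (metis of_nat_le_iff of_nat_mult of_nat_numeral)
      ultimately show ?thesis using mult_right_mono[OF \<open>real (fact k) \<le> 2 * real (card (?gd x))\<close> vnn[OF x, of "?c x"]]
        by (simp add: mult.assoc)
    qed
    have "real (fact k) * G B v mp = (\<Sum>x\<in>B. real (fact k) * v x (?c x))" unfolding GB by (simp add: sum_distrib_left)
    also have "\<dots> \<le> (\<Sum>x\<in>B. 2 * (\<Sum>zs\<in>permutations_of_set (B - {x}). ?T x zs))" using each by (intro sum_mono) auto
    also have "\<dots> = 2 * ?P1" by (simp add: sum_distrib_left)
    finally show ?thesis using True by simp
  qed
  have p2: "real (fact k) * real (k + 1 - L) * G B v mp \<le> 2 * ?P2"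
  proof -
    have each: "real (fact (k - 1)) * real (k + 1 - L) * G (B - {x}) v mp \<le>
        2 * (\<Sum>zs\<in>permutations_of_set (B - {x}). Sv mp L m v zs)" if x: "x \<in> B" for x
      using Suc.IH[of "B - {x}"] fin ck[OF x] Suc.prems by auto
    have "real (fact (k - 1)) * real (k + 1 - L) * (real (card B) - 1) * G B v mp \<le>
          real (fact (k - 1)) * real (k + 1 - L) * (\<Sum>x\<in>B. G (B - {x}) v mp)"
      using G_restrict[OF fin, of v mp] by (simp add: mult.assoc mult_left_mono)
    also have "\<dots> = (\<Sum>x\<in>B. real (fact (k - 1)) * real (k + 1 - L) * G (B - {x}) v mp)"
      by (simp add: sum_distrib_left)
    also have "\<dots> \<le> (\<Sum>x\<in>B. 2 * (\<Sum>zs\<in>permutations_of_set (B - {x}). Sv mp L m v zs))"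
      using each by (intro sum_mono) auto
    also have "\<dots> = 2 * ?P2" by (simp add: sum_distrib_left)
    finally have h: "real (fact (k - 1)) * real (k + 1 - L) * (real (card B) - 1) * G B v mp \<le> 2 * ?P2" .
    have eqn: "real (fact (k - 1)) * real (k + 1 - L) * (real (card B) - 1) = real (fact k) * real (k + 1 - L)"
    proof (cases k)
      case 0 then show ?thesis using Suc.prems by simp
    next
      case (Suc k')
      then show ?thesis using Suc.prems by (simp add: algebra_simps)
    qed
    from h show ?thesis by (simp only: eqn)
  qed
  show ?case
  proof (cases "L \<le> Suc k")
    case True
    have "real (Suc k + 1 - L) = 1 + real (k + 1 - L)" using True by simp
    then have "real (fact (Suc k - 1)) * real (Suc k + 1 - L) * G B v mp =
        real (fact k) * G B v mp + real (fact k) * real (k + 1 - L) * G B v mp"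
      by (simp add: algebra_simps)
    then show ?thesis using p1 p2 eq True by simp
  next
    case False
    then have "Suc k + 1 - L = 0" by simp
    moreover have "0 \<le> 2 * (\<Sum>ys\<in>permutations_of_set B. Sv mp L m v ys)"
    proof -
      have "0 \<le> Sv mp L m v ys" if "ys \<in> permutations_of_set B" for ys
        using that dmB by (intro Sv_nonneg) (auto simp: permutations_of_set_def)
      then show ?thesis by (simp add: sum_nonneg)
    qed
    ultimately show ?thesis by simp
  qed
qed




theorem theorem3p11:
  fixes n m :: nat
  shows "\<exists>R :: (real mech \<times> (nat \<Rightarrow> (nat \<Rightarrow> real) \<Rightarrow> real list \<Rightarrow> real)) pmf.
           universally_OSP n m R \<and> approximation n m 400 R"
proof -
  define mp where "mp = (m + 1) div 2"
  define L where "L = n - n div 3"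
  define P where "P = permutations_of_set {..<n}"
  define F where "F = (\<lambda>ys. (build mp (stepsR m L ys) (st0 m), strat mp m (stepsR m L ys)))"
  define R where "R = map_pmf F (pmf_of_set P)"
  have Pfin: "finite P" and Pne: "P \<noteq> {}" unfolding P_def by auto
  have setR: "set_pmf R = F ` P" unfolding R_def using Pfin Pne by simp
  have yp: "distinct ys \<and> set ys = {..<n}" if "ys \<in> P" for ys
    using that unfolding P_def permutations_of_set_def by auto
  have mpm: "mp \<le> m" unfolding mp_def by simp
  have uo: "universally_OSP n m R"
    unfolding universally_OSP_def
  proof (intro ballI, clarify)
    fix t S assume "(t, S) \<in> set_pmf R"
    then obtain ys where ys: "ys \<in> P" and tS: "(t, S) = F ys" using setR by auto
    have t: "t = build mp (stepsR m L ys) (st0 m)" and S: "S = strat mp m (stepsR m L ys)"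
      using tS unfolding F_def by auto
    have ow: "\<forall>s\<in>set (stepsR m L ys). owner s < n" using owners_stepsR yp[OF ys] by auto
    have "wf_mech n m t" unfolding t by (rule wf_build[OF ow]) (simp add: st0_def)
    moreover have "strategies n m t S" unfolding strategies_def t S using behavior_strat by blast
    moreover have "OSP n m t S" unfolding t S using OSP_build okl_stepsR yp[OF ys] by blast
    ultimately show "wf_mech n m t \<and> strategies n m t S \<and> OSP n m t S" by blast
  qed
  have ap: "approximation n m 400 R"
    unfolding approximation_def
  proof (intro allI impI)
    fix v :: "nat \<Rightarrow> nat \<Rightarrow> real"
    assume dm: "\<forall>i<n. dm_valuation m (v i)"
    let ?W = "\<lambda>ys. welfare n (build mp (stepsR m L ys) (st0 m)) (strat mp m (stepsR m L ys)) v"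
    have E: "measure_pmf.expectation R (\<lambda>(t, S). welfare n t S v) = (\<Sum>ys\<in>P. ?W ys) / real (card P)"
      unfolding R_def using integral_pmf_of_set[OF Pne Pfin] by (simp add: F_def)
    have cP: "card P = fact n" unfolding P_def by simp
    have Wge: "Sv mp L m v ys \<le> ?W ys" if ys: "ys \<in> P" for ys
    proof -
      have dmy: "\<forall>i\<in>set ys. dm_valuation m (v i)" using yp[OF ys] dm by auto
      have inv: "Inv mp L m v ys (trun mp v (stepsR m L ys) (st0 m))"
        using trun_inv[of ys m v mp L] yp[OF ys] dmy mpm by blast
      have out: "outcome_from (build mp (stepsR m L ys) (st0 m)) (\<lambda>j. strat mp m (stepsR m L ys) j (v j)) [] =
         (stal (trun mp v (stepsR m L ys) (st0 m)), stpy (trun mp v (stepsR m L ys) (st0 m)))"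
        by (rule truthful_outcome) simp
      have "?W ys = (\<Sum>i<n. v i (stal (trun mp v (stepsR m L ys) (st0 m)) i))"
        unfolding welfare_def alloc_def out by simp
      also have "\<dots> = (\<Sum>i\<in>set ys. v i (stal (trun mp v (stepsR m L ys) (st0 m)) i))"
        using yp[OF ys] by simp
      finally show ?thesis using inv unfolding Inv_def by linarith
    qed
    have dmB: "\<forall>i\<in>{..<n}. dm_valuation m (v i)" using dm by auto
    have Gnn: "0 \<le> G {..<n} v mp"
      using G_nonneg[where B="{..<n}" and v=v and s=mp] dm by (auto simp: dm_valuation_def)
    have OPTle: "OPT n m v \<le> 2 * G {..<n} v mp" using OPT_le[OF dm] unfolding mp_def by simp
    have Wsum: "(\<Sum>ys\<in>P. Sv mp L m v ys) \<le> (\<Sum>ys\<in>P. ?W ys)" using Wge by (intro sum_mono) auto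
    show "OPT n m v \<le> 400 * measure_pmf.expectation R (\<lambda>(t, S). welfare n t S v)"
    proof (cases "n = 0")
      case True
      have "G {..<n} v mp = 0" using True G_canon[of "{}" v mp] by (simp add: val_def)
      moreover have "?W ys = 0" if "ys \<in> P" for ys using True by (simp add: welfare_def)
      ultimately show ?thesis using OPTle E by simp
    next
      case False
      have L0: "0 < L" using False unfolding L_def by simp
      have nL: "2 * (n - L) \<le> L" unfolding L_def by simp
      have mpm2: "mp \<le> m - mp + 1" unfolding mp_def by simp
      have SB: "real (fact (n - 1)) * real (n + 1 - L) * G {..<n} v mp \<le> 2 * (\<Sum>ys\<in>P. Sv mp L m v ys)"
        using Sv_bound[of "{..<n}" n n L mp m v] L0 nL mpm2 dmB unfolding P_def by simp
      have fn: "real (fact n) = real n * real (fact (n - 1))"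
      proof -
        have "fact n = n * fact (n - 1)" using False by (cases n) auto
        then show ?thesis by (metis of_nat_mult)
      qed
      have nL3: "real n \<le> 3 * real (n + 1 - L)" unfolding L_def by simp
      have fpos: "0 < real (fact (n - 1))" by simp
      have "real (fact n) * (2 * G {..<n} v mp) \<le> real (fact n) * (400 * ((\<Sum>ys\<in>P. ?W ys) / real (fact n)))"
      proof -
        have "real (fact n) * (2 * G {..<n} v mp) = 2 * real n * real (fact (n - 1)) * G {..<n} v mp"
          using fn by simp
        also have "\<dots> \<le> 6 * real (n + 1 - L) * real (fact (n - 1)) * G {..<n} v mp"
          using nL3 fpos Gnn by (intro mult_right_mono) auto
        also have "\<dots> \<le> 6 * (2 * (\<Sum>ys\<in>P. Sv mp L m v ys))" 
        proof -
          have "6 * real (n + 1 - L) * real (fact (n - 1)) * G {..<n} v mp =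
                6 * (real (fact (n - 1)) * real (n + 1 - L) * G {..<n} v mp)" by (simp only: mult_ac)
          then show ?thesis using SB by linarith
        qed
        also have "\<dots> \<le> 400 * (\<Sum>ys\<in>P. ?W ys)"
        proof -
          have "0 \<le> (\<Sum>ys\<in>P. Sv mp L m v ys)"
          proof (rule sum_nonneg)
            fix ys assume "ys \<in> P"
            then have "\<forall>i\<in>set ys. dm_valuation m (v i)" using yp dm by auto
            then show "0 \<le> Sv mp L m v ys" by (rule Sv_nonneg)
          qed
          then show ?thesis using Wsum by linarith
        qed
        also have "\<dots> = real (fact n) * (400 * ((\<Sum>ys\<in>P. ?W ys) / real (fact n)))" by simp
        finally show ?thesis .
      qed
      then have h: "real (fact n) * (2 * G {..<n} v mp) \<le> real (fact n) * (400 * ((\<Sum>ys\<in>P. ?W ys) / real (fact n)))" .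
      have fpos': "0 < real (fact n)" by simp
      have "2 * G {..<n} v mp \<le> 400 * ((\<Sum>ys\<in>P. ?W ys) / real (fact n))"
        using mult_le_cancel_left_pos[OF fpos'] h by blast
      then show ?thesis using OPTle E cP by simp
    qed
  qed
  show ?thesis using uo ap by blast
qed


end
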